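(* Let $M^n$ be a hypersurface in $\mathbb{R}^{n+1}$ and $p\in M$. Suppose that at $p$ we have $H>0$ and $\|\mathring{A}\|^2=\varepsilon H^2$ for some $\varepsilon\in\left(0,\frac{1}{n(n-1)}\right)$. Then at $p$ $$nC-(1+n\varepsilon)H\|A\|^2\geq \varepsilon(1+n\varepsilon)\left(1-\sqrt{n(n-1)\varepsilon}\right)H^3,$$ where $C=\kappa_1^3+\dots+\kappa_n^3$.
   Context: $\kappa_1\le\dots\le\kappa_n$ are the principal curvatures at $p$, $H=\sum_i\kappa_i$ is the mean curvature, $\|A\|^2=\sum_i\kappa_i^2$, and $\|\mathring{A}\|^2=\|A\|^2-\frac1nH^2$ is the squared norm of the trace-free second fundamental form $h_{ij}-\frac1nHg_{ij}$. *)

theory Defs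
  imports Complex_Main
begin

text \<open>Pointwise quantities at p, in terms of the principal curvatures
  k 0, ..., k (n-1) (the paper's kappa_1, ..., kappa_n).\<close>

definition meanH :: "nat \<Rightarrow> (nat \<Rightarrow> real) \<Rightarrow> real" where
  "meanH n k = (\<Sum>i<n. k i)"

definition sqnormA :: "nat \<Rightarrow> (nat \<Rightarrow> real) \<Rightarrow> real" where
  "sqnormA n k = (\<Sum>i<n. (k i)^2)"

definition sqnormAo :: "nat \<Rightarrow> (nat \<Rightarrow> real) \<Rightarrow> real" where
  "sqnormAo n k = sqnormA n k - (meanH n k)^2 / real n"

definition cubeC :: "nat \<Rightarrow> (nat \<Rightarrow> real) \<Rightarrow> real" where
  "cubeC n k = (\<Sum>i<n. (k i)^3)"

end

theory Submission
  imports Defs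
begin

lemma cube_bound:
  fixes x u m :: real
  assumes "x \<ge> -m"
  shows "x^3 \<ge> -(m-2*u)*x^2 - (u^2-2*u*m)*x - u^2*m"
proof -
  have "x^3 - (-(m-2*u)*x^2 - (u^2-2*u*m)*x - u^2*m) = (x-u)^2*(x+m)"
    by (simp add: algebra_simps power2_eq_square power3_eq_cube)
  moreover have "(x-u)^2*(x+m) \<ge> 0" using assms by simp
  ultimately show ?thesis by linarith
qed

theorem lemma3:
  fixes n :: nat and k :: "nat \<Rightarrow> real" and \<epsilon> :: real
  assumes "n \<ge> 2"
    and "\<forall>i j. i \<le> j \<and> j < n \<longrightarrow> k i \<le> k j"
    and "meanH n k > 0"
    and "sqnormAo n k = \<epsilon> * (meanH n k)^2"
    and "0 < \<epsilon>" and "\<epsilon> < 1 / (real n * (real n - 1))"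
  shows "real n * cubeC n k - (1 + real n * \<epsilon>) * meanH n k * sqnormA n k
         \<ge> \<epsilon> * (1 + real n * \<epsilon>) * (1 - sqrt (real n * (real n - 1) * \<epsilon>)) * (meanH n k)^3"
proof -
  define H where "H = meanH n k"
  define c where "c = H / real n"
  define x where "x = (\<lambda>i. k i - c)"
  have n0: "real n \<ge> 2" using assms(1) by simp
  have Hpos: "H > 0" using assms(3) H_def by simp
  have nc: "real n * c = H" using n0 by (simp add: c_def)
  have Sx: "(\<Sum>i<n. x i) = 0"
    using nc by (simp add: x_def sum_subtractf H_def meanH_def)
  have S2: "sqnormA n k = (\<Sum>i<n. (x i)^2) + 2*c*(\<Sum>i<n. x i) + real n * c^2"
  proof -
    have "sqnormA n k = (\<Sum>i<n. (x i)^2 + 2*c*x i + c^2)"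
      unfolding sqnormA_def x_def by (rule sum.cong) (auto simp: power2_eq_square algebra_simps)
    thus ?thesis by (simp add: sum.distrib sum_distrib_left)
  qed
  have S3: "cubeC n k = (\<Sum>i<n. (x i)^3) + 3*c*(\<Sum>i<n. (x i)^2) + 3*c^2*(\<Sum>i<n. x i) + real n * c^3"
  proof -
    have "cubeC n k = (\<Sum>i<n. (x i)^3 + 3*c*(x i)^2 + 3*c^2*x i + c^3)"
      unfolding cubeC_def x_def by (rule sum.cong) (auto simp: power2_eq_square power3_eq_cube algebra_simps)
    thus ?thesis by (simp add: sum.distrib sum_distrib_left)
  qed
  define r2 where "r2 = (\<Sum>i<n. (x i)^2)"
  have ncc: "real n * c^2 = H^2 / real n" using nc n0
    by (simp add: c_def power2_eq_square)
  have r2e: "r2 = \<epsilon> * H^2"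
    using assms(4) S2 Sx ncc unfolding sqnormAo_def r2_def H_def by simp
  define t where "t = sqrt \<epsilon>"
  define a where "a = sqrt (real n * (real n - 1))"
  have t2: "t^2 = \<epsilon>" using assms(5) by (simp add: t_def)
  have tpos: "t > 0" using assms(5) by (simp add: t_def)
  have a2: "a^2 = real n * (real n - 1)" using n0 by (simp add: a_def)
  have apos: "a > 0" using n0 by (simp add: a_def)
  have sq: "sqrt (real n * (real n - 1) * \<epsilon>) = a * t"
    by (simp add: a_def t_def real_sqrt_mult)
  define u where "u = t * H / a"
  define m where "m = (real n - 1) * u"
  have au: "a * u = t * H" using apos by (simp add: u_def)
  have upos: "u \<ge> 0" using tpos Hpos apos by (simp add: u_def)
  have r2u: "r2 = real n * (real n - 1) * u^2"
  proof -
    have "r2 = (t*H)^2" using r2e t2 by (simp add: power_mult_distrib)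
    also have "\<dots> = (a*u)^2" using au by simp
    finally show ?thesis using a2 by (simp add: power_mult_distrib)
  qed
  have xbound: "x i \<ge> -m" if i: "i < n" for i
  proof -
    define d where "d = x i / (real n - 1)"
    have n1: "real n - 1 > 0" using n0 by simp
    have "(\<Sum>j<n. (x j + d)^2) = r2 + 2*d*(\<Sum>j<n. x j) + real n * d^2"
      unfolding r2_def by (simp add: power2_eq_square algebra_simps sum.distrib sum_distrib_left)
    hence e1: "(\<Sum>j<n. (x j + d)^2) = r2 + real n * d^2" using Sx by simp
    have "(x i + d)^2 \<le> (\<Sum>j<n. (x j + d)^2)"
      using i by (intro member_le_sum) auto
    hence "(x i + d)^2 \<le> r2 + real n * d^2" using e1 by simp
    moreover have "x i + d = real n * d" using n1 by (simp add: d_def field_simps)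
    ultimately have "(real n * d)^2 - real n * d^2 \<le> r2" by simp
    hence "real n * (real n - 1) * d^2 \<le> real n * (real n - 1) * u^2"
      using r2u by (simp add: power2_eq_square algebra_simps)
    hence "d^2 \<le> u^2" using n0 n1
      using mult_le_cancel_left_pos[of "real n * (real n - 1)"] by simp
    hence "\<bar>d\<bar> \<le> u" using upos by (metis abs_of_nonneg real_sqrt_abs real_sqrt_le_mono)
    hence "-u \<le> d" by simp
    hence "(real n - 1) * (-u) \<le> (real n - 1) * d" using n1
      by (intro mult_left_mono) auto
    hence "-(real n - 1) * u \<le> (real n - 1) * d" by (simp add: algebra_simps)
    moreover have "(real n - 1) * d = x i" using n1 by (simp add: d_def)
    ultimately show ?thesis by (simp add: m_def algebra_simps)
  qed
  have cb: "(\<Sum>i<n. (x i)^3) \<ge> (\<Sum>i<n. -(m-2*u)*(x i)^2 - (u^2-2*u*m)*x i - u^2*m)"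
    by (intro sum_mono cube_bound xbound) simp
  have "(\<Sum>i<n. -(m-2*u)*(x i)^2 - (u^2-2*u*m)*x i - u^2*m)
      = -(m-2*u)*r2 - (u^2-2*u*m)*(\<Sum>i<n. x i) - real n * u^2*m"
    unfolding r2_def by (simp add: sum_subtractf sum_distrib_left)
  hence cb2: "(\<Sum>i<n. (x i)^3) \<ge> - real n * (real n - 1) * (real n - 2) * u^3"
    using cb Sx r2u unfolding m_def by (simp add: power2_eq_square power3_eq_cube algebra_simps)
  define X3 where "X3 = (\<Sum>i<n. (x i)^3)"
  have LHS: "real n * cubeC n k - (1 + real n * \<epsilon>) * meanH n k * sqnormA n k
      = \<epsilon>*(1 - real n*\<epsilon>)*H^3 + real n * X3"
  proof -
    have c3: "real n * c^3 = H^3 / (real n)^2" and c1: "c = H / real n"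
      using nc n0 by (auto simp: c_def power3_eq_cube power2_eq_square)
    show ?thesis
      unfolding S3 S2 Sx X3_def[symmetric] r2_def[symmetric] r2e H_def[symmetric] ncc c3 c1
      using n0 by (simp add: field_simps power2_eq_square power3_eq_cube)
  qed
  have u3: "real n * (real n * (real n - 1) * (real n - 2) * u^3) = real n*(real n-2)*t^3*H^3/a"
  proof -
    have "a^3*u^3 = t^3*H^3" using au by (metis power_mult_distrib)
    moreover have "a^3 = real n * (real n - 1) * a" using a2 by (simp add: power3_eq_cube power2_eq_square)
    ultimately have "(real n * (real n - 1) * u^3) * a = t^3*H^3"
      by (simp add: algebra_simps)
    hence e: "real n * (real n - 1) * u^3 = t^3*H^3/a" using apos by (simp add: field_simps)
    have "real n * (real n * (real n - 1) * (real n - 2) * u^3) = real n * (real n - 2) * (real n * (real n - 1) * u^3)"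
      by (simp add: algebra_simps)
    also have "\<dots> = real n*(real n-2)*t^3*H^3/a" using e by simp
    finally show ?thesis .
  qed
  have key: "\<epsilon>*(1 - real n*\<epsilon>)*H^3 - real n*(real n-2)*t^3*H^3/a
     - \<epsilon> * (1 + real n * \<epsilon>) * (1 - a*t) * H^3 = t^3*H^3/a * real n * (1 - a*t)^2"
  proof -
    have "(t^2*(1 - real n*t^2)*H^3*a - real n*(real n-2)*t^3*H^3
     - t^2 * (1 + real n * t^2) * (1 - a*t) * H^3*a) - t^3*H^3 * real n * (1 - a*t)^2
       = t^3*H^3*(a^2 - real n*(real n - 1))"
      by (simp add: algebra_simps power2_eq_square power3_eq_cube)
    also have "\<dots> = 0" using a2 by simp
    finally have "(t^2*(1 - real n*t^2)*H^3*a - real n*(real n-2)*t^3*H^3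
     - t^2 * (1 + real n * t^2) * (1 - a*t) * H^3*a) = t^3*H^3 * real n * (1 - a*t)^2" by simp
    hence "t^2*(1 - real n*t^2)*H^3 - real n*(real n-2)*t^3*H^3/a
     - t^2 * (1 + real n * t^2) * (1 - a*t) * H^3 = t^3*H^3/a * real n * (1 - a*t)^2"
      using apos by (simp add: field_simps power2_eq_square power3_eq_cube)
    thus ?thesis using t2 by simp
  qed
  have "t^3*H^3/a * real n * (1 - a*t)^2 \<ge> 0" using tpos Hpos apos n0 by simp
  hence "\<epsilon> * (1 + real n * \<epsilon>) * (1 - a*t) * H^3 \<le> \<epsilon>*(1 - real n*\<epsilon>)*H^3 - real n*(real n-2)*t^3*H^3/a"
    using key by linarith
  also have "\<dots> \<le> \<epsilon>*(1 - real n*\<epsilon>)*H^3 + real n * X3"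
  proof -
    have "real n * (- real n * (real n - 1) * (real n - 2) * u ^ 3) \<le> real n * X3"
      using cb2 unfolding X3_def by (intro mult_left_mono) auto
    thus ?thesis using u3 by simp
  qed
  finally show ?thesis using LHS sq H_def by simp
qed

end
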